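(* Let $c_p\ge 1$ be an integer, let $k\ge 1$, and for each $1\le i\le k$ let $\gamma_i>0$ be a real constant, let $f_i(\alpha)$ be a pseudo-polynomial in $\alpha$, and let $g_i(n)$ be a pseudo-polynomial in $n$ in which every monomial $c\cdot n^{a}\ln^{b} n$ has $a\ge 0$ and $b\ge 0$. Put $$Q_L(\alpha,n):=\sum_{i=1}^{k}\gamma_i\cdot \exp\big(f_i(\alpha)+g_i(n)\big),$$ and consider the canonical constraint $$Q:\quad \exists \alpha_0\ \forall \alpha\ge \alpha_0\ \forall \text{ integers } n\ge c_p:\ Q_L(\alpha,n)\le 1 .$$ Run the procedure $\mathsf{Decide}$ (described in the context) on this input. Then: (1) (Completeness) If for arbitrarily large $\alpha$ there exists an integer $n\ge c_p$ with $Q_L(\alpha,n)>1$ (i.e. $Q$ does not hold), then $\mathsf{Decide}$ returns False. (2) (Soundness) For every $\varepsilon>0$: if there is $\alpha_0$ such that $Q_L(\alpha,n)\le 1-\varepsilon$ for all $\alpha\ge\alpha_0$ and all integers $n\ge c_p$, then $\mathsf{Decide}$ returns True.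
   Context: A pseudo-polynomial in a variable $x$ is a finite sum $\sum_j c_j\, x^{a_j}\ln^{b_j}x$ with real coefficients $c_j$ and integer exponents $a_j,b_j$ (considered for sufficiently large real $x$); limits as $x\to\infty$ are taken in $\mathbb{R}\cup\{\pm\infty\}$, with $\exp(-\infty)=0$. The procedure uses an oracle $\mathsf{NegativeLB}(P)$ that, given a pseudo-polynomial $P(n)$ for which such an integer exists, returns an integer $T^*$ such that $P(n)\le 0$ for every real $n\ge T^*$. Procedure $\mathsf{Decide}$: Step 1: set $T:=c_p$. For $i=1,\dots,k$: compute $M_i=\lim_{n\to\infty} g_i(n)$; if $M_i=+\infty$ return False; otherwise let $g_i'$ be the derivative of $g_i$ and set $T:=\max\{T,\mathsf{NegativeLB}(g_i')\}$. Step 2: for each integer $\bar n$ with $c_p\le \bar n\le T$: set $R:=0$; for $i=1,\dots,k$: compute $\Delta=\lim_{\alpha\to\infty}\big(f_i(\alpha)+g_i(\bar n)\big)$; if $\Delta=+\infty$ return False; otherwise set $R:=R+\gamma_i\exp(\Delta)$, and if $R\ge 1$ return False. Step 3: return True. *)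

theory Defs
  imports "HOL-Analysis.Analysis"
begin

text \<open>A pseudo-polynomial is represented as a finite list of monomials (c, a, b),
  standing for the sum of the terms c * x^a * (ln x)^b, with real c and integer a, b.\<close>
type_synonym pp = "(real \<times> int \<times> int) list"

definition pp_eval :: "pp \<Rightarrow> real \<Rightarrow> real" where
  "pp_eval P x = (\<Sum>(c, a, b) \<leftarrow> P. c * x powi a * (ln x) powi b)"

text \<open>Formal derivative of a pseudo-polynomial:
  d/dx (c x^a ln^b x) = c a x^(a-1) ln^b x + c b x^(a-1) ln^(b-1) x.\<close>
definition pp_deriv :: "pp \<Rightarrow> pp" where
  "pp_deriv P = concat (map (\<lambda>(c, a, b). [(c * of_int a, a - 1, b), (c * of_int b, a - 1, b - 1)]) P)"

definition lim_top :: "(real \<Rightarrow> real) \<Rightarrow> ereal" where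
  "lim_top h = Lim at_top (\<lambda>x. ereal (h x))"

text \<open>exp on extended reals with exp(-\<infinity>) = 0 (only used for values \<noteq> +\<infinity>).\<close>
definition ereal_exp :: "ereal \<Rightarrow> real" where
  "ereal_exp d = (case d of ereal r \<Rightarrow> exp r | _ \<Rightarrow> 0)"

definition negativeLB_spec :: "(pp \<Rightarrow> int) \<Rightarrow> bool" where
  "negativeLB_spec NLB \<longleftrightarrow>
     (\<forall>P. (\<exists>T::int. \<forall>x::real. x \<ge> real_of_int T \<longrightarrow> pp_eval P x \<le> 0)
          \<longrightarrow> (\<forall>x::real. x \<ge> real_of_int (NLB P) \<longrightarrow> pp_eval P x \<le> 0))"

text \<open>Input: list of triples (gamma_i, f_i, g_i), i = 1..k.
  Step 1: None = "return False", Some T = final value of T.\<close>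
fun decide_step1 :: "(pp \<Rightarrow> int) \<Rightarrow> int \<Rightarrow> (real \<times> pp \<times> pp) list \<Rightarrow> int option" where
  "decide_step1 NLB T [] = Some T"
| "decide_step1 NLB T ((\<gamma>, f, g) # rest) =
     (if lim_top (pp_eval g) = \<infinity> then None
      else decide_step1 NLB (max T (NLB (pp_deriv g))) rest)"

text \<open>Inner loop of Step 2 for a fixed nbar with accumulator R; False = "return False".\<close>
fun decide_inner :: "int \<Rightarrow> real \<Rightarrow> (real \<times> pp \<times> pp) list \<Rightarrow> bool" where
  "decide_inner nb R [] = True"
| "decide_inner nb R ((\<gamma>, f, g) # rest) =
     (let \<Delta> = lim_top (\<lambda>\<alpha>. pp_eval f \<alpha> + pp_eval g (real_of_int nb)) in
      if \<Delta> = \<infinity> then False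
      else (let R' = R + \<gamma> * ereal_exp \<Delta> in
            if R' \<ge> 1 then False else decide_inner nb R' rest))"

definition Decide :: "(pp \<Rightarrow> int) \<Rightarrow> int \<Rightarrow> (real \<times> pp \<times> pp) list \<Rightarrow> bool" where
  "Decide NLB cp inp =
     (case decide_step1 NLB cp inp of
        None \<Rightarrow> False
      | Some T \<Rightarrow> (\<forall>nb \<in> {cp..T}. decide_inner nb 0 inp))"

definition QL :: "(real \<times> pp \<times> pp) list \<Rightarrow> real \<Rightarrow> int \<Rightarrow> real" where
  "QL inp \<alpha> n = (\<Sum>(\<gamma>, f, g) \<leftarrow> inp. \<gamma> * exp (pp_eval f \<alpha> + pp_eval g (real_of_int n)))"

end

theory Submission
  imports Defs "HOL-Real_Asymp.Real_Asymp"
begin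

definition pmono :: "int \<times> int \<Rightarrow> real \<Rightarrow> real" where
  "pmono p x = x powi fst p * ln x powi snd p"

definition coef :: "pp \<Rightarrow> int \<times> int \<Rightarrow> real" where
  "coef P p = sum_list (map (\<lambda>(c, q). if q = p then c else 0) P)"

lemma pp_eval_alt: "pp_eval P x = sum_list (map (\<lambda>(c, q). c * pmono q x) P)"
  unfolding pp_eval_def pmono_def
  by (induction P) (auto simp: mult.assoc)

lemma coef_Cons: "coef ((c, q) # P) p = (if q = p then c else 0) + coef P p"
  by (simp add: coef_def)

lemma eval_coef:
  assumes "finite A" "snd ` set P \<subseteq> A"
  shows "pp_eval P x = (\<Sum>p\<in>A. coef P p * pmono p x)"
  using assms(2)
proof (induction P)
  case Nil
  then show ?case by (simp add: pp_eval_alt coef_def)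
next
  case (Cons it P)
  obtain c q where it: "it = (c, q)" by (cases it)
  have qA: "q \<in> A" using Cons.prems it by auto
  have "pp_eval (it # P) x = c * pmono q x + pp_eval P x"
    by (simp add: pp_eval_alt it)
  also have "pp_eval P x = (\<Sum>p\<in>A. coef P p * pmono p x)"
    using Cons by auto
  also have "c * pmono q x = (\<Sum>p\<in>A. (if q = p then c else 0) * pmono p x)"
  proof -
    have "(\<Sum>p\<in>A. (if q = p then c else 0) * pmono p x) = (\<Sum>p\<in>A. if q = p then c * pmono p x else 0)"
      by (rule sum.cong) auto
    also have "\<dots> = c * pmono q x" using qA assms(1) by (simp add: sum.delta)
    finally show ?thesis by simp
  qed
  finally show ?case
    by (simp add: it coef_Cons distrib_right sum.distrib)
qed

definition supp :: "pp \<Rightarrow> (int \<times> int) set" where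
  "supp P = {p \<in> snd ` set P. coef P p \<noteq> 0}"

lemma finite_supp: "finite (supp P)" by (simp add: supp_def)

lemma eval_supp: "pp_eval P x = (\<Sum>p\<in>supp P. coef P p * pmono p x)"
proof -
  have "pp_eval P x = (\<Sum>p\<in>snd ` set P. coef P p * pmono p x)"
    by (rule eval_coef) auto
  also have "\<dots> = (\<Sum>p\<in>supp P. coef P p * pmono p x)"
    by (rule sum.mono_neutral_right) (auto simp: supp_def)
  finally show ?thesis .
qed

definition lexless :: "int \<times> int \<Rightarrow> int \<times> int \<Rightarrow> bool" where
  "lexless p q \<longleftrightarrow> fst p < fst q \<or> (fst p = fst q \<and> snd p < snd q)"

lemma mono_powr: "x > 1 \<Longrightarrow> pmono (a, b) x = x powr real_of_int a * ln x powr real_of_int b"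
  by (simp add: pmono_def powr_real_of_int')

lemma mono_pos: "x > 1 \<Longrightarrow> pmono p x > 0"
  by (cases p) (simp add: mono_powr)

lemma mono_ratio_0:
  assumes "lexless p q"
  shows "((\<lambda>x. pmono p x / pmono q x) \<longlongrightarrow> 0) at_top"
proof -
  obtain a b a' b' where pq: "p = (a, b)" "q = (a', b')" by (cases p, cases q)
  have ev: "eventually (\<lambda>x. x powr real_of_int (a - a') * ln x powr real_of_int (b - b') = pmono p x / pmono q x) at_top"
    using eventually_gt_at_top[of 1]
    by eventually_elim (simp add: pq mono_powr powr_diff)
  have "((\<lambda>x. x powr real_of_int (a - a') * ln x powr real_of_int (b - b')) \<longlongrightarrow> 0) at_top"
  proof (cases "a < a'")
    case True
    then have "real_of_int (a - a') < 0" by simp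
    then show ?thesis by real_asymp
  next
    case False
    then have "a = a'" "b < b'" using assms pq by (auto simp: lexless_def)
    then have "real_of_int (b - b') < 0" by simp
    then have "((\<lambda>x. ln x powr real_of_int (b - b')) \<longlongrightarrow> 0) at_top" by real_asymp
    moreover have "eventually (\<lambda>x. ln x powr real_of_int (b - b') = x powr real_of_int (a - a') * ln x powr real_of_int (b - b')) at_top"
      using eventually_gt_at_top[of 1] by eventually_elim (simp add: \<open>a = a'\<close>)
    ultimately show ?thesis by (rule Lim_transform_eventually)
  qed
  then show ?thesis using ev by (rule Lim_transform_eventually)
qed

lemma mono_top:
  assumes "lexless (0, 0) q"
  shows "filterlim (pmono q) at_top at_top"
proof -
  obtain a b where q: "q = (a, b)" by (cases q)
  have ev: "eventually (\<lambda>x. x powr real_of_int a * ln x powr real_of_int b = pmono q x) at_top"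
    using eventually_gt_at_top[of 1]
    by eventually_elim (simp add: q mono_powr)
  have "filterlim (\<lambda>x. x powr real_of_int a * ln x powr real_of_int b) at_top at_top"
  proof (cases "0 < a")
    case True
    then have "real_of_int a > 0" by simp
    then show ?thesis by real_asymp
  next
    case False
    then have "a = 0" "0 < b" using assms q by (auto simp: lexless_def)
    then have "real_of_int b > 0" by simp
    then have "filterlim (\<lambda>x. ln x powr real_of_int b) at_top at_top" by real_asymp
    moreover have ev2: "eventually (\<lambda>x. ln x powr real_of_int b = x powr real_of_int a * ln x powr real_of_int b) at_top"
      using eventually_gt_at_top[of 1] by eventually_elim (simp add: \<open>a = 0\<close>)
    ultimately show ?thesis using filterlim_cong[OF refl refl ev2] by simp
  qed
  then show ?thesis using filterlim_cong[OF refl refl ev] by simp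
qed

lemma mono_zero:
  assumes "lexless q (0, 0)"
  shows "(pmono q \<longlongrightarrow> 0) at_top"
proof -
  have "((\<lambda>x. pmono q x / pmono (0,0) x) \<longlongrightarrow> 0) at_top" by (rule mono_ratio_0[OF assms])
  moreover have "\<And>x. pmono (0,0) x = 1" by (simp add: pmono_def)
  ultimately show ?thesis by simp
qed

lemma dominant:
  assumes "supp P \<noteq> {}"
  obtains q where "q \<in> supp P" "\<And>p. p \<in> supp P \<Longrightarrow> p \<noteq> q \<Longrightarrow> lexless p q"
    "((\<lambda>x. pp_eval P x / pmono q x) \<longlongrightarrow> coef P q) at_top"
proof -
  define S where "S = supp P"
  have fS: "finite S" using finite_supp S_def by simp
  define a where "a = Max (fst ` S)"
  have aS: "a \<in> fst ` S" unfolding a_def using fS assms S_def by simp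
  define B where "B = snd ` (S \<inter> {p. fst p = a})"
  have fB: "finite B" using fS B_def by simp
  have Bne: "B \<noteq> {}" using aS B_def by auto
  define b where "b = Max B"
  have bB: "b \<in> B" using fB Bne b_def by simp
  define q where "q = (a, b)"
  have qS: "q \<in> S" using bB B_def q_def by auto
  have dom: "lexless p q" if "p \<in> S" "p \<noteq> q" for p
  proof -
    have "fst p \<le> a" using that fS a_def by simp
    moreover have "fst p = a \<Longrightarrow> snd p \<le> b"
      using that fB b_def B_def by (auto intro!: Max_ge)
    ultimately show ?thesis using that q_def
      by (cases p) (auto simp: lexless_def)
  qed
  have ev: "eventually (\<lambda>x. coef P q + (\<Sum>p\<in>S - {q}. coef P p * (pmono p x / pmono q x))
              = pp_eval P x / pmono q x) at_top"
    using eventually_gt_at_top[of 1]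
  proof eventually_elim
    case (elim x)
    have mq: "pmono q x \<noteq> 0" using mono_pos[OF elim, of q] by simp
    have "pp_eval P x = coef P q * pmono q x + (\<Sum>p\<in>S - {q}. coef P p * pmono p x)"
      using eval_supp[of P x] S_def qS fS by (simp add: sum.remove)
    then have "pp_eval P x / pmono q x = coef P q + (\<Sum>p\<in>S - {q}. coef P p * pmono p x) / pmono q x"
      using mq by (simp add: add_divide_distrib)
    also have "(\<Sum>p\<in>S - {q}. coef P p * pmono p x) / pmono q x = (\<Sum>p\<in>S - {q}. coef P p * (pmono p x / pmono q x))"
      by (simp add: sum_divide_distrib)
    finally show ?case by simp
  qed
  have "((\<lambda>x. coef P q + (\<Sum>p\<in>S - {q}. coef P p * (pmono p x / pmono q x))) \<longlongrightarrow> coef P q + 0) at_top"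
    by (intro tendsto_add tendsto_const tendsto_null_sum tendsto_mult_right_zero mono_ratio_0 dom) auto
  then have "((\<lambda>x. pp_eval P x / pmono q x) \<longlongrightarrow> coef P q) at_top"
    using ev by (simp add: Lim_transform_eventually)
  then show ?thesis using that qS dom S_def by blast
qed

lemma supp_empty_eval: "supp P = {} \<Longrightarrow> pp_eval P x = 0"
  using eval_supp[of P x] by simp

lemma coef_supp: "q \<in> supp P \<Longrightarrow> coef P q \<noteq> 0" by (simp add: supp_def)

lemma eval_eq_mono_ratio':
  "eventually (\<lambda>x. pmono q x * (pp_eval P x / pmono q x) = pp_eval P x) at_top"
  using eventually_gt_at_top[of 1]
proof eventually_elim
  case (elim x)
  have "pmono q x \<noteq> 0" using mono_pos[OF elim, of q] by simp
  then show ?case by simp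
qed

lemma eval_eq_mono_ratio:
  "eventually (\<lambda>x. pp_eval P x = pmono q x * (pp_eval P x / pmono q x)) at_top"
  using eval_eq_mono_ratio'[of q P] by (rule eventually_mono) simp

lemma pp_limit_cases:
  "(\<forall>x. pp_eval P x = 0) \<or> (\<exists>c. ((\<lambda>x. pp_eval P x) \<longlongrightarrow> c) at_top)
   \<or> filterlim (pp_eval P) at_top at_top \<or> filterlim (pp_eval P) at_bot at_top"
proof (cases "supp P = {}")
  case True then show ?thesis using supp_empty_eval by auto
next
  case False
  obtain q where q: "q \<in> supp P" "\<And>p. p \<in> supp P \<Longrightarrow> p \<noteq> q \<Longrightarrow> lexless p q"
    and r: "((\<lambda>x. pp_eval P x / pmono q x) \<longlongrightarrow> coef P q) at_top"
    using dominant[OF False] by blast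
  have c0: "coef P q \<noteq> 0" using coef_supp q by simp
  have ev: "eventually (\<lambda>x. pmono q x * (pp_eval P x / pmono q x) = pp_eval P x) at_top"
    by (rule eval_eq_mono_ratio')
  consider "lexless (0,0) q" | "q = (0,0)" | "lexless q (0,0)"
    using less_linear[of "fst q" 0] less_linear[of "snd q" 0] by (cases q) (auto simp: lexless_def)
  then show ?thesis
  proof cases
    case 1
    have mt: "filterlim (pmono q) at_top at_top" by (rule mono_top[OF 1])
    show ?thesis
    proof (cases "coef P q > 0")
      case True
      have "filterlim (\<lambda>x. (pp_eval P x / pmono q x) * pmono q x) at_top at_top"
        by (rule filterlim_tendsto_pos_mult_at_top[OF r True mt])
      then have "filterlim (pp_eval P) at_top at_top"
        using filterlim_cong[OF refl refl ev] by (simp add: mult.commute)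
      then show ?thesis by simp
    next
      case False
      then have neg: "coef P q < 0" using c0 by simp
      have "filterlim (\<lambda>x. (pp_eval P x / pmono q x) * pmono q x) at_bot at_top"
        by (rule filterlim_tendsto_neg_mult_at_bot[OF r neg mt])
      then have "filterlim (pp_eval P) at_bot at_top"
        using filterlim_cong[OF refl refl ev] by (simp add: mult.commute)
      then show ?thesis by simp
    qed
  next
    case 2
    have "\<And>x. pmono q x = 1" using 2 by (simp add: pmono_def)
    then show ?thesis using r by auto
  next
    case 3
    have "((\<lambda>x. pmono q x * (pp_eval P x / pmono q x)) \<longlongrightarrow> 0 * coef P q) at_top"
      by (intro tendsto_mult mono_zero[OF 3] r)
    then have "((\<lambda>x. pp_eval P x) \<longlongrightarrow> 0) at_top"
      using ev by (simp add: Lim_transform_eventually)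
    then show ?thesis by blast
  qed
qed

lemma pp_limit: "\<exists>l. ((\<lambda>x. ereal (pp_eval P x)) \<longlongrightarrow> l) at_top"
  using pp_limit_cases[of P]
proof (elim disjE)
  assume "\<forall>x. pp_eval P x = 0" then show ?thesis by auto
next
  assume "\<exists>c. ((\<lambda>x. pp_eval P x) \<longlongrightarrow> c) at_top"
  then show ?thesis by auto
next
  assume "filterlim (pp_eval P) at_top at_top"
  then show ?thesis using ereal_tendsto_simps2(2)[of "pp_eval P" at_top] by (auto simp: comp_def)
next
  assume "filterlim (pp_eval P) at_bot at_top"
  then show ?thesis using ereal_tendsto_simps2(3)[of "pp_eval P" at_top] by (auto simp: comp_def)
qed

lemma lim_top_eq: "((\<lambda>x. ereal (h x)) \<longlongrightarrow> l) at_top \<Longrightarrow> lim_top h = l"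
  unfolding lim_top_def by (rule tendsto_Lim) simp

lemma pp_sign:
  "eventually (\<lambda>x. pp_eval P x > 0) at_top \<or> eventually (\<lambda>x. pp_eval P x < 0) at_top
   \<or> (\<forall>x. pp_eval P x = 0)"
proof (cases "supp P = {}")
  case True then show ?thesis using supp_empty_eval by auto
next
  case False
  obtain q where q: "q \<in> supp P"
    and r: "((\<lambda>x. pp_eval P x / pmono q x) \<longlongrightarrow> coef P q) at_top"
    using dominant[OF False] by blast
  have c0: "coef P q \<noteq> 0" using coef_supp q by simp
  have ev: "eventually (\<lambda>x. pp_eval P x = pmono q x * (pp_eval P x / pmono q x)) at_top"
    by (rule eval_eq_mono_ratio)
  have mp: "eventually (\<lambda>x. pmono q x > 0) at_top"
    using eventually_gt_at_top[of 1] by eventually_elim (rule mono_pos)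
  show ?thesis
  proof (cases "coef P q > 0")
    case True
    have "eventually (\<lambda>x. pp_eval P x / pmono q x > 0) at_top"
      using order_tendstoD(1)[OF r True] .
    with ev mp have "eventually (\<lambda>x. pp_eval P x > 0) at_top"
      by eventually_elim (metis mult_pos_pos)
    then show ?thesis by simp
  next
    case False
    then have neg: "coef P q < 0" using c0 by simp
    have "eventually (\<lambda>x. pp_eval P x / pmono q x < 0) at_top"
      using order_tendstoD(2)[OF r neg] .
    with ev mp have "eventually (\<lambda>x. pp_eval P x < 0) at_top"
      by eventually_elim (metis mult_pos_neg)
    then show ?thesis by simp
  qed
qed

lemma dom_infinite:
  assumes q: "q \<in> supp P" and r: "((\<lambda>x. pp_eval P x / pmono q x) \<longlongrightarrow> coef P q) at_top"
    and lq: "lexless (0,0) q"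
  shows "filterlim (pp_eval P) at_top at_top \<or> filterlim (pp_eval P) at_bot at_top"
proof -
  have c0: "coef P q \<noteq> 0" using coef_supp q by simp
  have ev: "eventually (\<lambda>x. pmono q x * (pp_eval P x / pmono q x) = pp_eval P x) at_top"
    by (rule eval_eq_mono_ratio')
  have mt: "filterlim (pmono q) at_top at_top" by (rule mono_top[OF lq])
  show ?thesis
  proof (cases "coef P q > 0")
    case True
    have "filterlim (\<lambda>x. (pp_eval P x / pmono q x) * pmono q x) at_top at_top"
      by (rule filterlim_tendsto_pos_mult_at_top[OF r True mt])
    then have "filterlim (pp_eval P) at_top at_top"
      using filterlim_cong[OF refl refl ev] by (simp add: mult.commute)
    then show ?thesis by simp
  next
    case False
    then have neg: "coef P q < 0" using c0 by simp
    have "filterlim (\<lambda>x. (pp_eval P x / pmono q x) * pmono q x) at_bot at_top"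
      by (rule filterlim_tendsto_neg_mult_at_bot[OF r neg mt])
    then have "filterlim (pp_eval P) at_bot at_top"
      using filterlim_cong[OF refl refl ev] by (simp add: mult.commute)
    then show ?thesis by simp
  qed
qed

lemma mono_deriv:
  fixes x :: real
  assumes "x > 0" "b \<ge> 0 \<or> ln x \<noteq> 0"
  shows "((\<lambda>x. c * x powi a * ln x powi b) has_real_derivative
          (c * of_int a * x powi (a - 1) * ln x powi b + c * of_int b * x powi (a - 1) * ln x powi (b - 1))) (at x)"
proof -
  have h1: "((\<lambda>x. x powi a) has_real_derivative of_int a * x powi (a - 1) * 1) (at x)"
    by (rule DERIV_power_int[OF DERIV_ident]) (use assms in auto)
  have h2: "((\<lambda>x. ln x powi b) has_real_derivative of_int b * ln x powi (b - 1) * inverse x) (at x)"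
    by (rule DERIV_power_int[OF DERIV_ln[OF assms(1)]]) (use assms in auto)
  have hm: "((\<lambda>x. x powi a * ln x powi b) has_real_derivative
      (of_int a * x powi (a - 1) * 1) * ln x powi b + x powi a * (of_int b * ln x powi (b - 1) * inverse x)) (at x)"
    using DERIV_mult'[OF h1 h2] by (simp add: ac_simps)
  have e: "x powi (a - 1) = x powi a * inverse x"
    using assms power_int_diff[of x a 1] by (simp add: divide_inverse)
  have eq: "c * ((of_int a * x powi (a - 1) * 1) * ln x powi b + x powi a * (of_int b * ln x powi (b - 1) * inverse x))
     = c * of_int a * x powi (a - 1) * ln x powi b + c * of_int b * x powi (a - 1) * ln x powi (b - 1)"
    unfolding e by (simp add: algebra_simps)
  have fe: "(\<lambda>x. c * x powi a * ln x powi b) = (\<lambda>x. c * (x powi a * ln x powi b))"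
    by (simp add: mult.assoc)
  show ?thesis unfolding fe eq[symmetric] by (rule DERIV_cmult[OF hm])
qed

lemma pp_eval_Cons: "pp_eval ((c, a, b) # P) x = c * x powi a * ln x powi b + pp_eval P x"
  by (simp add: pp_eval_def)

lemma pp_eval_append: "pp_eval (P @ Q) x = pp_eval P x + pp_eval Q x"
  by (simp add: pp_eval_def)

lemma pp_deriv_Cons: "pp_deriv ((c, a, b) # P) = [(c * of_int a, a - 1, b), (c * of_int b, a - 1, b - 1)] @ pp_deriv P"
  by (simp add: pp_deriv_def)

lemma pp_has_deriv:
  fixes x :: real
  assumes "x > 0" "\<forall>(c, a, b) \<in> set P. b \<ge> 0 \<or> ln x \<noteq> 0"
  shows "(pp_eval P has_real_derivative pp_eval (pp_deriv P) x) (at x)"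
  using assms(2)
proof (induction P)
  case Nil
  then show ?case by (simp add: pp_eval_def pp_deriv_def)
next
  case (Cons it P)
  obtain c a b where it: "it = (c, a, b)" by (cases it)
  have h: "b \<ge> 0 \<or> ln x \<noteq> 0" using Cons.prems it by auto
  have "((\<lambda>x. c * x powi a * ln x powi b + pp_eval P x) has_real_derivative
          (c * of_int a * x powi (a - 1) * ln x powi b + c * of_int b * x powi (a - 1) * ln x powi (b - 1))
          + pp_eval (pp_deriv P) x) (at x)"
    using mono_deriv[OF assms(1) h] Cons by (intro DERIV_add) auto
  moreover have "pp_eval ((c, a, b) # P) = (\<lambda>x. c * x powi a * ln x powi b + pp_eval P x)"
    by (rule ext) (simp add: pp_eval_Cons)
  ultimately show ?case
    by (simp add: it pp_deriv_Cons pp_eval_append pp_eval_Cons mult.assoc add.assoc)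
qed

lemma const_deriv_contra:
  assumes "\<forall>x. pp_eval g x = C" "x > 0" "\<forall>(c, a, b) \<in> set g. b \<ge> 0"
    and "pp_eval (pp_deriv g) x > 0"
  shows False
proof -
  have "\<forall>(c, a, b) \<in> set g. b \<ge> 0 \<or> ln x \<noteq> 0" using assms(3) by auto
  then have "(pp_eval g has_real_derivative pp_eval (pp_deriv g) x) (at x)"
    using pp_has_deriv[OF assms(2)] by blast
  moreover have "pp_eval g = (\<lambda>x. C)" using assms(1) by auto
  ultimately have "((\<lambda>x. C) has_real_derivative pp_eval (pp_deriv g) x) (at x)" by simp
  moreover have "((\<lambda>x. C) has_real_derivative 0) (at x)" by simp
  ultimately have "pp_eval (pp_deriv g) x = 0" by (rule DERIV_unique)
  then show False using assms(4) by simp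
qed

lemma g_deriv_nonpos:
  assumes ex: "\<forall>(c, a, b) \<in> set g. a \<ge> 0 \<and> b \<ge> 0"
    and lim: "lim_top (pp_eval g) \<noteq> \<infinity>"
  shows "\<exists>T::int. \<forall>x. x \<ge> real_of_int T \<longrightarrow> pp_eval (pp_deriv g) x \<le> 0"
proof -
  obtain l where l: "((\<lambda>x. ereal (pp_eval g x)) \<longlongrightarrow> l) at_top" using pp_limit by blast
  have lne: "l \<noteq> \<infinity>" using lim lim_top_eq[OF l] by simp
  have bnn: "\<forall>(c, a, b) \<in> set g. b \<ge> 0" using ex by auto
  have conv: "\<exists>T::int. \<forall>x. x \<ge> real_of_int T \<longrightarrow> pp_eval (pp_deriv g) x \<le> 0"
    if evn: "eventually (\<lambda>x. pp_eval (pp_deriv g) x \<le> 0) at_top"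
  proof -
    obtain N where N: "\<And>x. x \<ge> N \<Longrightarrow> pp_eval (pp_deriv g) x \<le> 0"
      using evn unfolding eventually_at_top_linorder by blast
    show ?thesis
      by (rule exI[of _ "\<lceil>N\<rceil>"]) (auto intro: N order_trans[OF le_of_int_ceiling])
  qed
  consider "eventually (\<lambda>x. pp_eval (pp_deriv g) x > 0) at_top"
    | "eventually (\<lambda>x. pp_eval (pp_deriv g) x < 0) at_top"
    | "\<forall>x. pp_eval (pp_deriv g) x = 0"
    using pp_sign by blast
  then show ?thesis
  proof cases
    case 2
    then show ?thesis by (intro conv) (auto elim: eventually_mono)
  next
    case 3
    then show ?thesis by auto
  next
    case 1
    then have "eventually (\<lambda>x. pp_eval (pp_deriv g) x > 0 \<and> x \<ge> 1) at_top"
      by (intro eventually_conj) (auto simp: eventually_ge_at_top)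
    then obtain N where N: "\<And>x. x \<ge> N \<Longrightarrow> pp_eval (pp_deriv g) x > 0 \<and> x \<ge> 1"
      unfolding eventually_at_top_linorder by blast
    have N1: "N \<ge> 1" using N by auto
    have incr: "pp_eval g N \<le> pp_eval g x" if "x \<ge> N" for x
    proof (rule DERIV_nonneg_imp_nondecreasing[OF that])
      fix y assume "N \<le> y" "y \<le> x"
      then have y: "y > 0" "pp_eval (pp_deriv g) y > 0" using N[of y] by auto
      have "\<forall>(c, a, b) \<in> set g. b \<ge> 0 \<or> ln y \<noteq> 0" using bnn by auto
      then have "(pp_eval g has_real_derivative pp_eval (pp_deriv g) y) (at y)"
        using pp_has_deriv[OF y(1)] by blast
      then show "\<exists>d. (pp_eval g has_real_derivative d) (at y) \<and> d \<ge> 0"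
        using y(2) by (intro exI[of _ "pp_eval (pp_deriv g) y"]) simp
    qed
    have pos: "pp_eval (pp_deriv g) N > 0" "N > 0" using N[of N] by auto
    show ?thesis
    proof (cases "supp g = {}")
      case True
      then have "\<forall>x. pp_eval g x = 0" using supp_empty_eval by auto
      then show ?thesis using const_deriv_contra[OF _ pos(2) bnn pos(1)] by blast
    next
      case False
      obtain q where q: "q \<in> supp g" "\<And>p. p \<in> supp g \<Longrightarrow> p \<noteq> q \<Longrightarrow> lexless p q"
        and r: "((\<lambda>x. pp_eval g x / pmono q x) \<longlongrightarrow> coef g q) at_top"
        using dominant[OF False] by blast
      have nn: "fst p \<ge> 0 \<and> snd p \<ge> 0" if "p \<in> supp g" for p
        using that ex by (auto simp: supp_def)
      show ?thesis
      proof (cases "q = (0,0)")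
        case True
        have "supp g \<subseteq> {(0,0)}"
        proof
          fix p assume p: "p \<in> supp g"
          show "p \<in> {(0,0)}"
          proof (rule ccontr)
            assume "p \<notin> {(0,0)}"
            then have "lexless p (0,0)" using q(2)[OF p] True by auto
            then show False using nn[OF p] by (auto simp: lexless_def)
          qed
        qed
        then have "supp g = {(0,0)}" using q(1) True by auto
        then have "\<forall>x. pp_eval g x = coef g (0,0)"
          using eval_supp[of g] by (simp add: pmono_def)
        then show ?thesis using const_deriv_contra[OF _ pos(2) bnn pos(1)] by blast
      next
        case False
        then have lq: "lexless (0,0) q" using nn[OF q(1)] by (cases q) (auto simp: lexless_def)
        show ?thesis
        proof -
          have "filterlim (pp_eval g) at_top at_top \<or> filterlim (pp_eval g) at_bot at_top"
            by (rule dom_infinite[OF q(1) r lq])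
          then show ?thesis
          proof
            assume "filterlim (pp_eval g) at_top at_top"
            then have "((\<lambda>x. ereal (pp_eval g x)) \<longlongrightarrow> \<infinity>) at_top"
              using ereal_tendsto_simps2(2)[of "pp_eval g" at_top] by (simp add: comp_def)
            then have "l = \<infinity>" using tendsto_unique[OF _ l] by simp
            then show ?thesis using lne by simp
          next
            assume "filterlim (pp_eval g) at_bot at_top"
            then have "eventually (\<lambda>x. pp_eval g x < pp_eval g N) at_top"
              by (simp add: filterlim_at_bot_dense)
            then obtain M where M: "\<And>x. x \<ge> M \<Longrightarrow> pp_eval g x < pp_eval g N"
              unfolding eventually_at_top_linorder by blast
            have "pp_eval g (max M N) < pp_eval g N" by (rule M) simp
            moreover have "pp_eval g N \<le> pp_eval g (max M N)" by (rule incr) simp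
            ultimately show ?thesis by simp
          qed
        qed
      qed
    qed
  qed
qed

definition Dl :: "int \<Rightarrow> pp \<Rightarrow> pp \<Rightarrow> ereal" where
  "Dl nb f g = lim_top (\<lambda>\<alpha>. pp_eval f \<alpha> + pp_eval g (real_of_int nb))"

definition trm :: "int \<Rightarrow> real \<times> pp \<times> pp \<Rightarrow> real" where
  "trm nb it = (case it of (\<gamma>, f, g) \<Rightarrow> \<gamma> * ereal_exp (Dl nb f g))"

lemma trm_simp: "trm nb (\<gamma>, f, g) = \<gamma> * ereal_exp (Dl nb f g)"
  by (simp add: trm_def)

lemma step1_Some:
  "decide_step1 NLB T l = Some T' \<Longrightarrow>
   T \<le> T' \<and> (\<forall>(\<gamma>, f, g) \<in> set l. lim_top (pp_eval g) \<noteq> \<infinity> \<and> NLB (pp_deriv g) \<le> T')"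
proof (induction l arbitrary: T)
  case Nil then show ?case by simp
next
  case (Cons it l)
  obtain \<gamma> f g where it: "it = (\<gamma>, f, g)" by (cases it)
  show ?case
  proof (cases "lim_top (pp_eval g) = \<infinity>")
    case True then show ?thesis using Cons.prems it by simp
  next
    case False
    then have "decide_step1 NLB (max T (NLB (pp_deriv g))) l = Some T'" using Cons.prems it by simp
    from Cons.IH[OF this] show ?thesis using it False by auto
  qed
qed

lemma step1_ok:
  "(\<forall>(\<gamma>, f, g) \<in> set l. lim_top (pp_eval g) \<noteq> \<infinity>) \<Longrightarrow> \<exists>T'. decide_step1 NLB T l = Some T'"
proof (induction l arbitrary: T)
  case Nil then show ?case by simp
next
  case (Cons it l)
  obtain \<gamma> f g where it: "it = (\<gamma>, f, g)" by (cases it)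
  then show ?case using Cons by auto
qed

lemma inner_sound:
  "(\<forall>(\<gamma>, f, g) \<in> set l. Dl nb f g \<noteq> \<infinity>) \<Longrightarrow> (\<forall>it \<in> set l. trm nb it \<ge> 0) \<Longrightarrow>
   R + sum_list (map (trm nb) l) < 1 \<Longrightarrow> decide_inner nb R l"
proof (induction l arbitrary: R)
  case Nil then show ?case by simp
next
  case (Cons it l)
  obtain \<gamma> f g where it: "it = (\<gamma>, f, g)" by (cases it)
  have nn: "sum_list (map (trm nb) l) \<ge> 0" using Cons.prems(2) by (intro sum_list_nonneg) auto
  have "R + \<gamma> * ereal_exp (Dl nb f g) + sum_list (map (trm nb) l) < 1"
    using Cons.prems(3) it by (simp add: trm_simp add.assoc)
  then have "R + \<gamma> * ereal_exp (Dl nb f g) < 1" using nn by linarith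
  moreover have "decide_inner nb (R + \<gamma> * ereal_exp (Dl nb f g)) l"
    using Cons.IH[of "R + \<gamma> * ereal_exp (Dl nb f g)"] Cons.prems it
      \<open>R + \<gamma> * ereal_exp (Dl nb f g) + sum_list (map (trm nb) l) < 1\<close> by auto
  ultimately show ?case using Cons.prems(1) it by (simp add: Dl_def Let_def)
qed

lemma inner_complete:
  "decide_inner nb R l \<Longrightarrow> R < 1 \<Longrightarrow>
   (\<forall>(\<gamma>, f, g) \<in> set l. Dl nb f g \<noteq> \<infinity>) \<and> R + sum_list (map (trm nb) l) < 1"
proof (induction l arbitrary: R)
  case Nil then show ?case by simp
next
  case (Cons it l)
  obtain \<gamma> f g where it: "it = (\<gamma>, f, g)" by (cases it)
  have D: "Dl nb f g \<noteq> \<infinity>" and R': "R + \<gamma> * ereal_exp (Dl nb f g) < 1"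
    and rest: "decide_inner nb (R + \<gamma> * ereal_exp (Dl nb f g)) l"
    using Cons.prems it by (auto simp: Dl_def Let_def split: if_splits)
  from Cons.IH[OF rest R'] D it show ?case by (auto simp: trm_def add.assoc)
qed

lemma exp_lim:
  assumes "((\<lambda>x. ereal (h x)) \<longlongrightarrow> l) at_top" "l \<noteq> \<infinity>"
  shows "((\<lambda>x. exp (h x)) \<longlongrightarrow> ereal_exp l) at_top"
proof (cases l)
  case (real r)
  then have "(h \<longlongrightarrow> r) at_top" using assms(1) by simp
  then show ?thesis using real by (simp add: ereal_exp_def tendsto_exp)
next
  case PInf then show ?thesis using assms by simp
next
  case MInf
  then have "filterlim h at_bot at_top"
    using assms(1) ereal_tendsto_simps2(3)[of h at_top] by (simp add: comp_def)
  then have "((\<lambda>x. exp (h x)) \<longlongrightarrow> 0) at_top"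
    by (rule filterlim_compose[OF exp_at_bot])
  then show ?thesis using MInf by (simp add: ereal_exp_def)
qed

lemma pp_eval_const: "pp_eval [(C, 0, 0)] x = C"
  by (simp add: pp_eval_def)

lemma f_plus_limit: "\<exists>l. ((\<lambda>\<alpha>. ereal (pp_eval f \<alpha> + C)) \<longlongrightarrow> l) at_top"
  using pp_limit[of "f @ [(C, 0, 0)]"] by (simp add: pp_eval_append pp_eval_const)

lemma Dl_lim:
  obtains l where "((\<lambda>\<alpha>. ereal (pp_eval f \<alpha> + pp_eval g (real_of_int nb))) \<longlongrightarrow> l) at_top"
    "Dl nb f g = l"
  using f_plus_limit[of f "pp_eval g (real_of_int nb)"] lim_top_eq Dl_def by metis

lemma item_lim:
  assumes "Dl nb f g \<noteq> \<infinity>"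
  shows "((\<lambda>\<alpha>. \<gamma> * exp (pp_eval f \<alpha> + pp_eval g (real_of_int nb))) \<longlongrightarrow> \<gamma> * ereal_exp (Dl nb f g)) at_top"
proof -
  obtain l where l: "((\<lambda>\<alpha>. ereal (pp_eval f \<alpha> + pp_eval g (real_of_int nb))) \<longlongrightarrow> l) at_top"
    "Dl nb f g = l" by (rule Dl_lim)
  show ?thesis using exp_lim[OF l(1)] assms l(2) by (intro tendsto_mult tendsto_const) auto
qed

lemma tendsto_sum_list:
  "(\<And>it. it \<in> set l \<Longrightarrow> ((\<lambda>x. h it x) \<longlongrightarrow> v it) F) \<Longrightarrow>
   ((\<lambda>x. sum_list (map (\<lambda>it. h it x) l)) \<longlongrightarrow> sum_list (map v l)) F"
  for h :: "'a \<Rightarrow> 'b \<Rightarrow> real"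
  by (induction l) (auto intro!: tendsto_add)

lemma QL_lim:
  assumes "\<forall>(\<gamma>, f, g) \<in> set inp. Dl nb f g \<noteq> \<infinity>"
  shows "((\<lambda>\<alpha>. QL inp \<alpha> nb) \<longlongrightarrow> sum_list (map (trm nb) inp)) at_top"
proof -
  have "((\<lambda>\<alpha>. sum_list (map (\<lambda>it. (case it of (\<gamma>, f, g) \<Rightarrow> \<gamma> * exp (pp_eval f \<alpha> + pp_eval g (real_of_int nb)))) inp))
      \<longlongrightarrow> sum_list (map (trm nb) inp)) at_top"
  proof (rule tendsto_sum_list)
    fix it assume "it \<in> set inp"
    then show "((\<lambda>\<alpha>. case it of (\<gamma>, f, g) \<Rightarrow> \<gamma> * exp (pp_eval f \<alpha> + pp_eval g (real_of_int nb))) \<longlongrightarrow> trm nb it) at_top"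
      using assms item_lim by (cases it) (auto simp: trm_def)
  qed
  then show ?thesis by (simp add: QL_def)
qed

lemma term_le_QL:
  assumes "(\<gamma>, f, g) \<in> set inp" "\<forall>(\<gamma>, f, g) \<in> set inp. \<gamma> > 0"
  shows "\<gamma> * exp (pp_eval f \<alpha> + pp_eval g (real_of_int n)) \<le> QL inp \<alpha> n"
  unfolding QL_def
proof (rule member_le_sum_list)
  show "\<gamma> * exp (pp_eval f \<alpha> + pp_eval g (real_of_int n))
     \<in> set (map (\<lambda>(\<gamma>, f, g). \<gamma> * exp (pp_eval f \<alpha> + pp_eval g (real_of_int n))) inp)"
    using assms(1) by force
next
  fix x assume "x \<in> set (map (\<lambda>(\<gamma>, f, g). \<gamma> * exp (pp_eval f \<alpha> + pp_eval g (real_of_int n))) inp)"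
  then show "x \<ge> 0" using assms(2) by (auto intro: less_imp_le)
qed

lemma big_term: "(\<gamma>::real) > 0 \<Longrightarrow> (z::real) > - ln \<gamma> \<Longrightarrow> \<gamma> * exp z > 1"
proof -
  assume g: "\<gamma> > 0" and z: "z > - ln \<gamma>"
  have "exp z > exp (- ln \<gamma>)" using z by (simp only: exp_less_cancel_iff)
  also have "exp (- ln \<gamma>) = 1 / \<gamma>" using g by (simp add: exp_minus inverse_eq_divide)
  finally show ?thesis using g by (simp add: field_simps)
qed

theorem mainTheorem1:
  fixes NLB :: "pp \<Rightarrow> int" and cp :: int and inp :: "(real \<times> pp \<times> pp) list"
  assumes nlb_spec: "negativeLB_spec NLB"
    and cp: "cp \<ge> 1"
    and k: "inp \<noteq> []"
    and gamma_pos: "\<forall>(\<gamma>, f, g) \<in> set inp. \<gamma> > 0"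
    and g_exps: "\<forall>(\<gamma>, f, g) \<in> set inp. \<forall>(c, a, b) \<in> set g. a \<ge> 0 \<and> b \<ge> 0"
  shows "((\<forall>\<alpha>0. \<exists>\<alpha> \<ge> \<alpha>0. \<exists>n::int. n \<ge> cp \<and> QL inp \<alpha> n > 1) \<longrightarrow> \<not> Decide NLB cp inp)
       \<and> (\<forall>\<epsilon>>0. (\<exists>\<alpha>0. \<forall>\<alpha> \<ge> \<alpha>0. \<forall>n::int. n \<ge> cp \<longrightarrow> QL inp \<alpha> n \<le> 1 - \<epsilon>)
               \<longrightarrow> Decide NLB cp inp)"
proof -
  have complete: "\<exists>\<alpha>0. \<forall>\<alpha>\<ge>\<alpha>0. \<forall>n::int. n \<ge> cp \<longrightarrow> QL inp \<alpha> n < 1" if Dec: "Decide NLB cp inp"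
  proof -
    obtain T where T: "decide_step1 NLB cp inp = Some T"
      using Dec by (cases "decide_step1 NLB cp inp") (auto simp: Decide_def)
    have inner: "\<forall>nb\<in>{cp..T}. decide_inner nb 0 inp" using Dec T by (simp add: Decide_def)
    have s1: "cp \<le> T \<and> (\<forall>(\<gamma>, f, g) \<in> set inp. lim_top (pp_eval g) \<noteq> \<infinity> \<and> NLB (pp_deriv g) \<le> T)"
      by (rule step1_Some[OF T])
    have gmono: "pp_eval g (real_of_int n) \<le> pp_eval g (real_of_int T)"
      if it: "(\<gamma>, f, g) \<in> set inp" and nT: "n \<ge> T" for \<gamma> f g n
    proof -
      have ex: "\<forall>(c, a, b) \<in> set g. a \<ge> 0 \<and> b \<ge> 0" using g_exps it by auto
      have lim: "lim_top (pp_eval g) \<noteq> \<infinity>" and nl: "NLB (pp_deriv g) \<le> T" using s1 it by auto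
      have "\<exists>T0::int. \<forall>x. x \<ge> real_of_int T0 \<longrightarrow> pp_eval (pp_deriv g) x \<le> 0"
        by (rule g_deriv_nonpos[OF ex lim])
      then have np: "\<forall>x. x \<ge> real_of_int (NLB (pp_deriv g)) \<longrightarrow> pp_eval (pp_deriv g) x \<le> 0"
        using nlb_spec unfolding negativeLB_spec_def by blast
      have "real_of_int T \<le> real_of_int n" using nT by simp
      then show ?thesis
      proof (rule DERIV_nonpos_imp_nonincreasing)
        fix y assume y: "real_of_int T \<le> y" "y \<le> real_of_int n"
        have "1 \<le> T" using s1 cp by linarith
        then have "(1::real) \<le> real_of_int T" by simp
        then have y0: "y > 0" using y(1) by linarith
        have "\<forall>(c, a, b) \<in> set g. b \<ge> 0 \<or> ln y \<noteq> 0" using ex by auto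
        then have "(pp_eval g has_real_derivative pp_eval (pp_deriv g) y) (at y)"
          using pp_has_deriv[OF y0] by blast
        moreover have "pp_eval (pp_deriv g) y \<le> 0"
          using np y(1) nl by (meson order_trans of_int_le_iff)
        ultimately show "\<exists>d. (pp_eval g has_real_derivative d) (at y) \<and> d \<le> 0" by blast
      qed
    qed
    have evs: "\<forall>nb\<in>{cp..T}. eventually (\<lambda>\<alpha>. QL inp \<alpha> nb < 1) at_top"
    proof
      fix nb assume nb: "nb \<in> {cp..T}"
      have "(\<forall>(\<gamma>, f, g) \<in> set inp. Dl nb f g \<noteq> \<infinity>) \<and> 0 + sum_list (map (trm nb) inp) < 1"
        using inner nb by (intro inner_complete) auto
      then show "eventually (\<lambda>\<alpha>. QL inp \<alpha> nb < 1) at_top"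
        using QL_lim[of inp nb] by (auto intro: order_tendstoD(2))
    qed
    have "eventually (\<lambda>\<alpha>. \<forall>nb\<in>{cp..T}. QL inp \<alpha> nb < 1) at_top"
      by (rule eventually_ball_finite[OF _ evs]) simp
    then obtain \<alpha>0 where a0: "\<And>\<alpha>. \<alpha> \<ge> \<alpha>0 \<Longrightarrow> \<forall>nb\<in>{cp..T}. QL inp \<alpha> nb < 1"
      unfolding eventually_at_top_linorder by blast
    show ?thesis
    proof (intro exI allI impI)
      fix \<alpha> :: real and n :: int assume \<alpha>: "\<alpha> \<ge> \<alpha>0" and n: "n \<ge> cp"
      show "QL inp \<alpha> n < 1"
      proof (cases "n \<le> T")
        case True then show ?thesis using a0[OF \<alpha>] n by auto
      next
        case False
        have "QL inp \<alpha> n \<le> QL inp \<alpha> T"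
          unfolding QL_def
        proof (rule sum_list_mono)
          fix it assume it: "it \<in> set inp"
          obtain \<gamma> f g where itd: "it = (\<gamma>, f, g)" by (cases it)
          have "\<gamma> > 0" using gamma_pos it itd by auto
          moreover have "pp_eval g (real_of_int n) \<le> pp_eval g (real_of_int T)"
            using gmono[of \<gamma> f g n] it itd False by auto
          ultimately show "(case it of (\<gamma>, f, g) \<Rightarrow> \<gamma> * exp (pp_eval f \<alpha> + pp_eval g (real_of_int n)))
              \<le> (case it of (\<gamma>, f, g) \<Rightarrow> \<gamma> * exp (pp_eval f \<alpha> + pp_eval g (real_of_int T)))"
            using itd by simp
        qed
        also have "QL inp \<alpha> T < 1" using a0[OF \<alpha>] s1 by auto
        finally show ?thesis .
      qed
    qed
  qed
  have sound: "Decide NLB cp inp"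
    if eps: "\<epsilon> > 0" and B0: "\<forall>\<alpha> \<ge> \<alpha>0. \<forall>n::int. n \<ge> cp \<longrightarrow> QL inp \<alpha> n \<le> 1 - \<epsilon>" for \<epsilon> \<alpha>0
  proof -
    have lims: "\<forall>(\<gamma>, f, g) \<in> set inp. lim_top (pp_eval g) \<noteq> \<infinity>"
    proof (clarify)
      fix \<gamma> f g assume it: "(\<gamma>, f, g) \<in> set inp" and eq: "lim_top (pp_eval g) = \<infinity>"
      have gp: "\<gamma> > 0" using gamma_pos it by auto
      obtain l where l: "((\<lambda>x. ereal (pp_eval g x)) \<longlongrightarrow> l) at_top" using pp_limit by blast
      have "l = \<infinity>" using eq lim_top_eq[OF l] by simp
      then have "filterlim (pp_eval g) at_top at_top"
        using l ereal_tendsto_simps2(2)[of "pp_eval g" at_top] by (simp add: comp_def)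
      then have "eventually (\<lambda>x. - ln \<gamma> - pp_eval f \<alpha>0 < pp_eval g x) at_top"
        by (simp add: filterlim_at_top_dense)
      then obtain M where M: "\<And>x. x \<ge> M \<Longrightarrow> - ln \<gamma> - pp_eval f \<alpha>0 < pp_eval g x"
        unfolding eventually_at_top_linorder by blast
      define n where "n = max cp \<lceil>M\<rceil>"
      have "real_of_int n \<ge> M" unfolding n_def by linarith
      then have "- ln \<gamma> < pp_eval f \<alpha>0 + pp_eval g (real_of_int n)" using M by force
      then have "\<gamma> * exp (pp_eval f \<alpha>0 + pp_eval g (real_of_int n)) > 1" using big_term gp by blast
      moreover have "\<gamma> * exp (pp_eval f \<alpha>0 + pp_eval g (real_of_int n)) \<le> QL inp \<alpha>0 n"
        by (rule term_le_QL[OF it gamma_pos])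
      moreover have "QL inp \<alpha>0 n \<le> 1 - \<epsilon>" using B0 n_def by auto
      ultimately show False using eps by linarith
    qed
    obtain T where T: "decide_step1 NLB cp inp = Some T" using step1_ok[OF lims] by blast
    have "decide_inner nb 0 inp" if nb: "nb \<in> {cp..T}" for nb
    proof (rule inner_sound)
      show Dne: "\<forall>(\<gamma>, f, g) \<in> set inp. Dl nb f g \<noteq> \<infinity>"
      proof (clarify)
        fix \<gamma> f g assume it: "(\<gamma>, f, g) \<in> set inp" and eq: "Dl nb f g = \<infinity>"
        have gp: "\<gamma> > 0" using gamma_pos it by auto
        obtain l where l: "((\<lambda>\<alpha>. ereal (pp_eval f \<alpha> + pp_eval g (real_of_int nb))) \<longlongrightarrow> l) at_top"
          "Dl nb f g = l" by (rule Dl_lim)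
        have "l = \<infinity>" using eq l by simp
        then have "filterlim (\<lambda>\<alpha>. pp_eval f \<alpha> + pp_eval g (real_of_int nb)) at_top at_top"
          using l(1) ereal_tendsto_simps2(2)[of "\<lambda>\<alpha>. pp_eval f \<alpha> + pp_eval g (real_of_int nb)" at_top]
          by (simp add: comp_def)
        then have "eventually (\<lambda>\<alpha>. - ln \<gamma> < pp_eval f \<alpha> + pp_eval g (real_of_int nb)) at_top"
          by (simp add: filterlim_at_top_dense)
        then obtain M where M: "\<And>\<alpha>. \<alpha> \<ge> M \<Longrightarrow> - ln \<gamma> < pp_eval f \<alpha> + pp_eval g (real_of_int nb)"
          unfolding eventually_at_top_linorder by blast
        define \<alpha> where "\<alpha> = max \<alpha>0 M"
        have "\<gamma> * exp (pp_eval f \<alpha> + pp_eval g (real_of_int nb)) > 1"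
          using big_term gp M[of \<alpha>] \<alpha>_def by auto
        moreover have "\<gamma> * exp (pp_eval f \<alpha> + pp_eval g (real_of_int nb)) \<le> QL inp \<alpha> nb"
          by (rule term_le_QL[OF it gamma_pos])
        moreover have "QL inp \<alpha> nb \<le> 1 - \<epsilon>" using B0 nb \<alpha>_def by auto
        ultimately show False using eps by linarith
      qed
      show "\<forall>it\<in>set inp. trm nb it \<ge> 0"
      proof
        fix it assume it: "it \<in> set inp"
        obtain \<gamma> f g where itd: "it = (\<gamma>, f, g)" by (cases it)
        have "\<gamma> > 0" using gamma_pos it itd by auto
        moreover have "ereal_exp (Dl nb f g) \<ge> 0"
          by (cases "Dl nb f g") (auto simp: ereal_exp_def)
        ultimately show "trm nb it \<ge> 0" using itd by (simp add: trm_simp)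
      qed
      have lim: "((\<lambda>\<alpha>. QL inp \<alpha> nb) \<longlongrightarrow> sum_list (map (trm nb) inp)) at_top"
        by (rule QL_lim[OF Dne])
      have "eventually (\<lambda>\<alpha>. QL inp \<alpha> nb \<le> 1 - \<epsilon>) at_top"
        using B0 nb unfolding eventually_at_top_linorder by auto
      then have "sum_list (map (trm nb) inp) \<le> 1 - \<epsilon>"
        using tendsto_upperbound[OF lim] by simp
      then show "0 + sum_list (map (trm nb) inp) < 1" using eps by simp
    qed
    then show ?thesis using T by (simp add: Decide_def)
  qed
  show ?thesis
  proof (intro conjI impI allI)
    assume H: "\<forall>\<alpha>0. \<exists>\<alpha> \<ge> \<alpha>0. \<exists>n::int. n \<ge> cp \<and> QL inp \<alpha> n > 1"
    show "\<not> Decide NLB cp inp"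
    proof
      assume "Decide NLB cp inp"
      then obtain \<alpha>0 where a0: "\<forall>\<alpha>\<ge>\<alpha>0. \<forall>n::int. n \<ge> cp \<longrightarrow> QL inp \<alpha> n < 1" using complete by blast
      obtain \<alpha> n where "\<alpha> \<ge> \<alpha>0" "n \<ge> cp" "QL inp \<alpha> n > 1" using H by blast
      then show False using a0 by force
    qed
  next
    fix \<epsilon> :: real
    assume "\<epsilon> > 0" "\<exists>\<alpha>0. \<forall>\<alpha> \<ge> \<alpha>0. \<forall>n::int. n \<ge> cp \<longrightarrow> QL inp \<alpha> n \<le> 1 - \<epsilon>"
    then show "Decide NLB cp inp" using sound by blast
  qed
qed

end
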